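(* Let $n,q\ge 1$, let $\hat\theta$ be a deterministic (measurable) map from datasets of size $n$ to $\mathbb{R}^q$, let $\alpha>0$, $0<\epsilon<2$, $0<\delta<1$, and let $\mathcal{G}$ be a set of datasets with $\mathcal{G}\subseteq \mathrm{sub}_\alpha(\Delta_{\hat\theta})$. If $\gamma$ is a sub-distance to $\mathcal{G}^c$, then the ePTR output $\tilde\theta_\gamma$ (built from $\hat\theta,\alpha,\gamma,\epsilon,\delta$ and any fixed no-reply distribution $\pi_\perp$) is $(\epsilon,\delta)$-differentially private.
   Context: Datasets are $n$-tuples $\mathcal{X}=(z_1,\dots,z_n)$ of points of a data space $\mathcal{Z}$. For datasets $\mathcal{X},\mathcal{X}'$, $D_H(\mathcal{X},\mathcal{X}')$ denotes the number of indices $i$ with $z_i\neq z_i'$ (the paper calls this the Hellinger distance; it is the Hamming distance); $\mathcal{X},\mathcal{X}'$ are neighbors if $D_H(\mathcal{X},\mathcal{X}')=1$. A randomized map $A$ from datasets to an output space is $(\epsilon,\delta)$-differentially private (DP) if $P(A(\mathcal{X})\in\mathcal{B})\le e^{\epsilon}P(A(\mathcal{X}')\in\mathcal{B})+\delta$ for all neighbors $\mathcal{X},\mathcal{X}'$ and all measurable $\mathcal{B}$. Local sensitivity: $\Delta_{\hat\theta}(\mathcal{X})=\sup\{\|\hat\theta(\mathcal{X})-\hat\theta(\mathcal{X}')\|: D_H(\mathcal{X},\mathcal{X}')=1\}$; the sub-sensitivity set is $\mathrm{sub}_\alpha(\Delta_{\hat\theta})=\{\mathcal{X}:\Delta_{\hat\theta}(\mathcal{X})\le\alpha\}$.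 Sub-distance: given a set $\mathcal{G}$ of datasets, a function $\gamma$ from datasets to $[0,\infty)$ is a sub-distance to $\mathcal{G}^c$ if $|\gamma(\mathcal{X})-\gamma(\mathcal{X}')|\le D_H(\mathcal{X},\mathcal{X}')$ for all $\mathcal{X},\mathcal{X}'$ and $\{\mathcal{X}:\gamma(\mathcal{X})>0\}\subseteq\mathcal{G}$. Efficient PTR (ePTR): fix $q$, a map $\hat\theta$ into $\mathbb{R}^q$, a level $\alpha>0$, a function $\gamma$ from datasets to $[0,\infty)$, $\epsilon>0$, $\delta\in(0,1)$, and a fixed probability distribution $\pi_\perp$ on $\mathbb{R}^q$ (the "no reply" output $\perp$; a point mass is allowed). Let $M=1+\frac{2}{\epsilon}\log\max\{1/\delta,1/\epsilon\}$ and $p(\mathcal{X})=\frac{\exp(\frac12\epsilon(\gamma(\mathcal{X})-M))}{\exp(\frac12\epsilon(\gamma(\mathcal{X})-M))+1}$. On input $\mathcal{X}$, draw independently $I\sim\mathrm{Bernoulli}(p(\mathcal{X}))$, $\zeta\sim\mathcal{N}(0,I_q)$ and $W\sim\pi_\perp$, and output $\tilde\theta_\gamma(\mathcal{X})=\tilde\theta_\alpha(\mathcal{X}):=\hat\theta(\mathcal{X})+\frac{2\alpha}{\epsilon}\sqrt{2\log(1.25/\delta)}\,\zeta$ if $I=1$ and $\tilde\theta_\gamma(\mathcal{X})=W$ if $I=0$. *)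

theory Defs
  imports "HOL-Probability.Probability"
begin

text \<open>Datasets are lists over the data space 'z; datasets of size n are lists of length n.
  Hamming distance (called Hellinger distance in the paper).\<close>
definition hamming :: "'z list \<Rightarrow> 'z list \<Rightarrow> nat" where
  "hamming X X' = card {i. i < length X \<and> X ! i \<noteq> X' ! i}"

definition datasets :: "nat \<Rightarrow> 'z list set" where
  "datasets n = {X. length X = n}"

definition neighbors :: "nat \<Rightarrow> 'z list \<Rightarrow> 'z list \<Rightarrow> bool" where
  "neighbors n X X' \<longleftrightarrow> X \<in> datasets n \<and> X' \<in> datasets n \<and> hamming X X' = 1"

definition local_sens :: "nat \<Rightarrow> ('z list \<Rightarrow> 'a::real_normed_vector) \<Rightarrow> 'z list \<Rightarrow> ereal" where
  "local_sens n \<theta> X = (SUP X'\<in>{X'. neighbors n X X'}. ereal (norm (\<theta> X - \<theta> X')))"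

definition sub_sens :: "nat \<Rightarrow> real \<Rightarrow> ('z list \<Rightarrow> 'a::real_normed_vector) \<Rightarrow> 'z list set" where
  "sub_sens n \<alpha> \<theta> = {X \<in> datasets n. local_sens n \<theta> X \<le> ereal \<alpha>}"

definition sub_distance :: "nat \<Rightarrow> 'z list set \<Rightarrow> ('z list \<Rightarrow> real) \<Rightarrow> bool" where
  "sub_distance n G \<gamma> \<longleftrightarrow>
     (\<forall>X\<in>datasets n. \<gamma> X \<ge> 0) \<and>
     (\<forall>X\<in>datasets n. \<forall>X'\<in>datasets n. \<bar>\<gamma> X - \<gamma> X'\<bar> \<le> real (hamming X X')) \<and>
     {X \<in> datasets n. \<gamma> X > 0} \<subseteq> G"

definition std_gauss :: "(real ^ 'q) measure" where
  "std_gauss = density lborel (\<lambda>x. \<Prod>i\<in>UNIV. ennreal (std_normal_density (x $ i)))"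

definition ePTR_M :: "real \<Rightarrow> real \<Rightarrow> real" where
  "ePTR_M \<epsilon> \<delta> = 1 + 2 / \<epsilon> * ln (max (1 / \<delta>) (1 / \<epsilon>))"

definition ePTR_p :: "real \<Rightarrow> real \<Rightarrow> real \<Rightarrow> real" where
  "ePTR_p \<epsilon> \<delta> g = exp (\<epsilon> / 2 * (g - ePTR_M \<epsilon> \<delta>)) / (exp (\<epsilon> / 2 * (g - ePTR_M \<epsilon> \<delta>)) + 1)"

definition ePTR :: "('z list \<Rightarrow> real ^ 'q) \<Rightarrow> real \<Rightarrow> ('z list \<Rightarrow> real) \<Rightarrow> real \<Rightarrow> real
    \<Rightarrow> (real ^ 'q) measure \<Rightarrow> 'z list \<Rightarrow> (real ^ 'q) measure" where
  "ePTR \<theta> \<alpha> \<gamma> \<epsilon> \<delta> \<pi> X =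
     distr (measure_pmf (bernoulli_pmf (ePTR_p \<epsilon> \<delta> (\<gamma> X))) \<Otimes>\<^sub>M (std_gauss \<Otimes>\<^sub>M \<pi>)) borel
       (\<lambda>(I, \<zeta>, W). if I then \<theta> X + (2 * \<alpha> / \<epsilon> * sqrt (2 * ln (1.25 / \<delta>))) *\<^sub>R \<zeta> else W)"

definition DP :: "nat \<Rightarrow> real \<Rightarrow> real \<Rightarrow> ('z list \<Rightarrow> 'b measure) \<Rightarrow> bool" where
  "DP n \<epsilon> \<delta> A \<longleftrightarrow>
     (\<forall>X X' B. neighbors n X X' \<longrightarrow> B \<in> sets (A X) \<longrightarrow>
        measure (A X) B \<le> exp \<epsilon> * measure (A X') B + \<delta>)"

end

theory Submission
  imports Defs
begin

lemma std_normal_total: "(\<integral>\<^sup>+x. ennreal (std_normal_density x) \<partial>lborel) = 1"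
proof -
  interpret prob_space "density lborel (normal_density 0 1)" by (rule prob_space_normal_density) simp
  have "emeasure (density lborel (normal_density 0 1)) UNIV = 1" using emeasure_space_1 by simp
  then show ?thesis by (simp add: emeasure_density)
qed

lemma std_normal_half: "(\<integral>\<^sup>+x. indicator {0<..} x * ennreal (std_normal_density x) \<partial>lborel) = 1/2"
proof -
  let ?A = "\<integral>\<^sup>+x. indicator {0<..} x * ennreal (std_normal_density x) \<partial>lborel"
  let ?B = "\<integral>\<^sup>+x. indicator {..<0} x * ennreal (std_normal_density x) \<partial>lborel"
  have "?B = (\<integral>\<^sup>+x. indicator {..<0} x * ennreal (std_normal_density x) \<partial>distr lborel borel uminus)"
    by (simp add: lborel_distr_uminus)
  also have "\<dots> = (\<integral>\<^sup>+x. indicator {..<0} (-x) * ennreal (std_normal_density (-x)) \<partial>lborel)"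
    by (subst nn_integral_distr) auto
  also have "\<dots> = ?A"
    by (intro nn_integral_cong) (auto simp: std_normal_density_def indicator_def)
  finally have BA: "?B = ?A" .
  have "1 = (\<integral>\<^sup>+x. ennreal (std_normal_density x) \<partial>lborel)" using std_normal_total by simp
  also have "\<dots> = (\<integral>\<^sup>+x. indicator {0<..} x * ennreal (std_normal_density x) + indicator {..<0} x * ennreal (std_normal_density x) \<partial>lborel)"
  proof (rule nn_integral_cong_AE)
    show "AE x in lborel. ennreal (std_normal_density x) = indicator {0<..} x * ennreal (std_normal_density x) + indicator {..<0} x * ennreal (std_normal_density x)"
      using AE_lborel_singleton[of "0::real"] by eventually_elim (auto simp: indicator_def)
  qed
  also have "\<dots> = ?A + ?B" by (rule nn_integral_add) auto
  finally have "?A + ?A = 1" using BA by simp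
  then have "2 * ?A = 1" by (metis mult_2)
  then have "?A * 2 / 2 = 1 / 2" by (simp add: mult.commute)
  then show ?thesis by (simp add: ennreal_mult_divide_eq)
qed

lemma std_normal_tail_pos:
  fixes t :: real assumes "0 \<le> t"
  shows "(\<integral>\<^sup>+x. indicator {t<..} x * ennreal (std_normal_density x) \<partial>lborel) \<le> ennreal (exp (- t\<^sup>2 / 2) / 2)"
proof -
  have "(\<integral>\<^sup>+x. indicator {t<..} x * ennreal (std_normal_density x) \<partial>lborel)
      = (\<integral>\<^sup>+x. indicator {t<..} x * ennreal (std_normal_density x) \<partial>distr lborel borel ((+) t))"
    by (simp add: lborel_distr_plus)
  also have "\<dots> = (\<integral>\<^sup>+y. indicator {t<..} (t + y) * ennreal (std_normal_density (t + y)) \<partial>lborel)"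
    by (subst nn_integral_distr) auto
  also have "\<dots> \<le> (\<integral>\<^sup>+y. ennreal (exp (- t\<^sup>2 / 2)) * (indicator {0<..} y * ennreal (std_normal_density y)) \<partial>lborel)"
  proof (rule nn_integral_mono)
    fix y :: real
    show "indicator {t<..} (t + y) * ennreal (std_normal_density (t + y)) \<le> ennreal (exp (- t\<^sup>2 / 2)) * (indicator {0<..} y * ennreal (std_normal_density y))"
    proof (cases "0 < y")
      case True
      have "exp (- (t + y)\<^sup>2 / 2) \<le> exp (- t\<^sup>2 / 2) * exp (- y\<^sup>2 / 2)"
        unfolding mult_exp_exp using True assms by (simp add: power2_eq_square field_simps)
      then have "std_normal_density (t + y) \<le> exp (- t\<^sup>2 / 2) * std_normal_density y"
        unfolding std_normal_density_def by (simp add: field_simps)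
      then show ?thesis using True by (simp add: ennreal_mult'[symmetric] ennreal_leI)
    qed (simp add: indicator_def)
  qed
  also have "\<dots> = ennreal (exp (- t\<^sup>2 / 2)) * (1/2)"
    by (subst nn_integral_cmult) (auto simp: std_normal_half)
  also have "\<dots> = ennreal (exp (- t\<^sup>2 / 2) / 2)"
    by (simp add: ennreal_times_divide, subst divide_ennreal[symmetric]) auto
  finally show ?thesis .
qed

lemma ennreal_half: "(1/2::ennreal) = ennreal (1/2)"
  by (metis divide_ennreal ennreal_1 ennreal_numeral zero_le_one zero_less_numeral)

lemma ennreal_lin: "0 \<le> a \<Longrightarrow> 0 \<le> b \<Longrightarrow> 0 \<le> c \<Longrightarrow> ennreal a + ennreal b * ennreal c = ennreal (a + b*c)"
  by (simp add: ennreal_mult)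

lemma std_normal_tail_neg:
  fixes t :: real assumes "t < 0"
  shows "(\<integral>\<^sup>+x. indicator {t<..} x * ennreal (std_normal_density x) \<partial>lborel) \<le> ennreal (1/2 - t / 2)"
proof -
  have phi_le: "std_normal_density x \<le> 1/2" for x
  proof -
    have "exp (- x\<^sup>2 / 2) \<le> 1" by simp
    moreover have "2 \<le> sqrt (2 * pi)" using pi_gt3 by (simp add: real_le_rsqrt)
    ultimately have "(1 / sqrt (2 * pi)) * exp (- x\<^sup>2 / 2) \<le> (1/2) * 1"
      by (intro mult_mono) (auto simp: divide_simps)
    then show ?thesis unfolding std_normal_density_def by simp
  qed
  have "(\<integral>\<^sup>+x. indicator {t<..} x * ennreal (std_normal_density x) \<partial>lborel)
      \<le> (\<integral>\<^sup>+x. indicator {0<..} x * ennreal (std_normal_density x) + ennreal (1/2) * indicator {t<..0} x \<partial>lborel)"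
    using ennreal_leI[OF phi_le]
    by (intro nn_integral_mono) (auto simp: indicator_def)
  also have "\<dots> = 1/2 + ennreal (1/2) * emeasure lborel {t<..0}"
    by (subst nn_integral_add) (auto simp: std_normal_half nn_integral_cmult_indicator)
  also have "\<dots> = ennreal (1/2) + ennreal (1/2) * ennreal (-t)"
    using assms by (simp only: ennreal_half emeasure_lborel_Ioc) simp
  also have "\<dots> = ennreal (1/2 + 1/2 * (-t))"
    using assms by (intro ennreal_lin) auto
  also have "\<dots> = ennreal (1/2 - t / 2)" by (simp add: algebra_simps)
  finally show ?thesis .
qed


definition gdens :: "'a::euclidean_space \<Rightarrow> real" where
  "gdens x = (\<Prod>b\<in>Basis. std_normal_density (x \<bullet> b))"

definition Gm :: "'a::euclidean_space measure" where
  "Gm = density lborel (\<lambda>x. ennreal (gdens x))"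

abbreviation N1 :: "real measure" where
  "N1 \<equiv> density lborel (\<lambda>x. ennreal (std_normal_density x))"

definition PB :: "('a::euclidean_space \<Rightarrow> real) measure" where
  "PB = PiM Basis (\<lambda>_. N1)"

definition TB :: "('a::euclidean_space \<Rightarrow> real) \<Rightarrow> 'a" where
  "TB f = (\<Sum>b\<in>Basis. f b *\<^sub>R b)"

lemma prob_N1: "prob_space N1"
  by (rule prob_space_normal_density) simp

lemma sets_N1[simp]: "sets N1 = sets borel" by simp

lemma TB_inner: "b \<in> Basis \<Longrightarrow> TB f \<bullet> b = f b"
  unfolding TB_def by (simp add: inner_sum_left inner_Basis if_distrib cong: if_cong)

lemma TB_meas_L[measurable]: "TB \<in> measurable (PiM Basis (\<lambda>_. lborel)) borel"
  unfolding TB_def by measurable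

lemma TB_meas_N[measurable]: "TB \<in> measurable (PiM Basis (\<lambda>_. N1)) borel"
  unfolding TB_def by measurable

lemma gdens_meas[measurable]: "gdens \<in> borel_measurable borel"
  unfolding gdens_def by measurable

lemma indicator_PiE_prod:
  "finite I \<Longrightarrow> f \<in> PiE I (\<lambda>_. UNIV) \<Longrightarrow> (indicator (PiE I A) f :: ennreal) = (\<Prod>i\<in>I. indicator (A i) (f i))"
  by (auto simp: indicator_def PiE_iff prod_zero_iff)

lemma PB_density: "density (PiM Basis (\<lambda>_. lborel)) (\<lambda>f. ennreal (gdens (TB f :: 'a::euclidean_space))) = (PB :: ('a \<Rightarrow> real) measure)"
proof -
  interpret N: product_sigma_finite "\<lambda>_::'a. N1"
    unfolding product_sigma_finite_def using prob_N1 prob_space_imp_sigma_finite by blast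
  interpret L: product_sigma_finite "\<lambda>_::'a. lborel :: real measure"
    unfolding product_sigma_finite_def using sigma_finite_lborel by blast
  show ?thesis unfolding PB_def
  proof (rule N.PiM_eqI)
    show "finite (Basis :: 'a set)" by simp
    show "sets (density (PiM Basis (\<lambda>_. lborel)) (\<lambda>f. ennreal (gdens (TB f :: 'a)))) = sets (PiM Basis (\<lambda>_::'a. N1))"
      unfolding sets_density by (rule sets_PiM_cong) simp_all
    fix A :: "'a \<Rightarrow> real set" assume A: "\<And>i. i \<in> Basis \<Longrightarrow> A i \<in> sets N1"
    have "emeasure (density (PiM Basis (\<lambda>_. lborel)) (\<lambda>f. ennreal (gdens (TB f :: 'a)))) (PiE Basis A)
        = (\<integral>\<^sup>+f. ennreal (gdens (TB f :: 'a)) * indicator (PiE Basis A) f \<partial>PiM Basis (\<lambda>_. lborel))"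
      using A by (intro emeasure_density) (auto intro!: sets_PiM_I_finite simp del: sets_N1)
    also have "\<dots> = (\<integral>\<^sup>+f. (\<Prod>b\<in>Basis. ennreal (std_normal_density (f b)) * indicator (A b) (f b)) \<partial>PiM Basis (\<lambda>_. lborel))"
    proof (rule nn_integral_cong)
      fix f assume f: "f \<in> space (PiM Basis (\<lambda>_::'a. lborel :: real measure))"
      then have fE: "f \<in> PiE Basis (\<lambda>_. UNIV)" by (simp add: space_PiM)
      have "ennreal (gdens (TB f :: 'a)) = (\<Prod>b\<in>Basis. ennreal (std_normal_density (f b)))"
        unfolding gdens_def by (simp add: TB_inner prod_ennreal)
      then show "ennreal (gdens (TB f :: 'a)) * indicator (PiE Basis A) f = (\<Prod>b\<in>Basis. ennreal (std_normal_density (f b)) * indicator (A b) (f b))"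
        using indicator_PiE_prod[OF _ fE, of A] by (simp add: prod.distrib)
    qed
    also have "\<dots> = (\<Prod>b\<in>Basis. \<integral>\<^sup>+x. ennreal (std_normal_density x) * indicator (A b) x \<partial>lborel)"
      using A by (intro L.product_nn_integral_prod) auto
    also have "\<dots> = (\<Prod>b\<in>Basis. emeasure N1 (A b))"
      using A by (intro prod.cong refl) (simp add: emeasure_density)
    finally show "emeasure (density (PiM Basis (\<lambda>_. lborel)) (\<lambda>f. ennreal (gdens (TB f :: 'a)))) (PiE Basis A) = (\<Prod>b\<in>Basis. emeasure N1 (A b))" .
  qed
qed

lemma Gm_distr: "(Gm :: 'a::euclidean_space measure) = distr PB borel TB"
proof -
  have "(Gm :: 'a measure) = density (distr (PiM Basis (\<lambda>_. lborel)) borel TB) (\<lambda>x. ennreal (gdens x))"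
    unfolding Gm_def TB_def by (subst lborel_eq) (rule refl)
  also have "\<dots> = distr (density (PiM Basis (\<lambda>_. lborel)) (\<lambda>f. ennreal (gdens (TB f :: 'a)))) borel TB"
    by (intro density_distr) auto
  also have "\<dots> = distr PB borel TB" by (simp add: PB_density)
  finally show ?thesis .
qed


lemma prob_PB: "prob_space (PB :: ('a::euclidean_space \<Rightarrow> real) measure)"
  unfolding PB_def by (rule prob_space_PiM) (rule prob_N1)

lemma distr_PB_comp:
  assumes "(b::'a::euclidean_space) \<in> Basis"
  shows "distr PB N1 (\<lambda>f. f b) = N1"
  unfolding PB_def by (rule distr_PiM_component[OF prob_N1 assms])

lemma PB_comp_distributed:
  assumes b: "(b::'a::euclidean_space) \<in> Basis"
  shows "distributed PB lborel (\<lambda>f. f b) (\<lambda>x. ennreal (std_normal_density x))"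
proof -
  have m: "(\<lambda>f. f b) \<in> measurable PB N1"
    unfolding PB_def using b by (rule measurable_component_singleton)
  have "distr PB lborel (\<lambda>f. f b) = distr PB N1 (\<lambda>f. f b)"
    by (rule distr_cong) auto
  also have "\<dots> = N1" by (rule distr_PB_comp[OF b])
  finally show ?thesis unfolding distributed_def
    using m by (auto simp: measurable_cong_sets[OF refl sets_N1])
qed

lemma PB_indep: "prob_space.indep_vars (PB :: ('a::euclidean_space \<Rightarrow> real) measure) (\<lambda>_. borel) (\<lambda>b f. f b) Basis"
proof -
  interpret prob_space "PB :: ('a \<Rightarrow> real) measure" by (rule prob_PB)
  have rv: "random_variable borel (\<lambda>f. f b)" if "b \<in> Basis" for b :: 'a
    using PB_comp_distributed[OF that] unfolding distributed_def
    by (auto simp: measurable_cong_sets[OF refl sets_lborel])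
  show ?thesis
  proof (subst indep_vars_iff_distr_eq_PiM')
    show "(Basis :: 'a set) \<noteq> {}" by simp
    show "\<And>i. i \<in> Basis \<Longrightarrow> random_variable borel (\<lambda>f. f i)" by (rule rv)
    have "distr (PB :: ('a \<Rightarrow> real) measure) (PiM Basis (\<lambda>_. borel)) (\<lambda>x. \<lambda>i\<in>Basis. x i) = distr PB (PiM Basis (\<lambda>_. borel)) (\<lambda>x. x)"
      by (rule distr_cong) (auto simp: PB_def space_PiM)
    also have "\<dots> = PB"
      by (rule distr_id2) (simp add: PB_def, rule sets_PiM_cong, simp_all)
    also have "\<dots> = PiM Basis (\<lambda>i. distr PB borel (\<lambda>f. f i))"
    proof -
      have eq: "N1 = distr (PiM Basis (\<lambda>_. N1)) borel (\<lambda>f. f i)" if i: "i \<in> Basis" for i :: 'a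
      proof -
        have "distr (PB :: ('a \<Rightarrow> real) measure) borel (\<lambda>f. f i) = distr PB N1 (\<lambda>f. f i)"
          by (rule distr_cong) auto
        also have "\<dots> = N1" using distr_PB_comp[OF i] by simp
        finally show ?thesis by (simp add: PB_def)
      qed
      show ?thesis unfolding PB_def[of] by (rule PiM_cong) (simp, erule eq)
    qed
    finally show "distr (PB :: ('a \<Rightarrow> real) measure) (PiM Basis (\<lambda>_. borel)) (\<lambda>x. \<lambda>i\<in>Basis. x i) = PiM Basis (\<lambda>i. distr PB borel (\<lambda>f. f i))" .
  qed
qed

lemma PB_inner_normal:
  fixes w :: "'a::euclidean_space" assumes w: "w \<noteq> 0"
  shows "distributed (PB :: ('a \<Rightarrow> real) measure) lborel (\<lambda>f. (TB f \<bullet> w) / norm w) (\<lambda>x. ennreal (std_normal_density x))"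
proof -
  interpret prob_space "PB :: ('a \<Rightarrow> real) measure" by (rule prob_PB)
  define J where "J = {b \<in> (Basis :: 'a set). w \<bullet> b \<noteq> 0}"
  have Jfin: "finite J" and JB: "J \<subseteq> Basis" unfolding J_def by auto
  have Jne: "J \<noteq> {}"
  proof
    assume "J = {}"
    then have "\<forall>b\<in>Basis. w \<bullet> b = 0" unfolding J_def by auto
    then have "w = 0" using euclidean_all_zero_iff by blast
    with w show False by simp
  qed
  define X where "X b f = 0 + (w \<bullet> b) * f b" for b :: 'a and f :: "'a \<Rightarrow> real"
  have dX: "distributed PB lborel (X b) (normal_density 0 \<bar>w \<bullet> b\<bar>)" if b: "b \<in> J" for b
  proof -
    have bB: "b \<in> Basis" and nz: "w \<bullet> b \<noteq> 0" using b unfolding J_def by auto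
    have "distributed PB lborel (\<lambda>x. 0 + (w \<bullet> b) * x b) (normal_density (0 + (w \<bullet> b) * 0) (\<bar>w \<bullet> b\<bar> * 1))"
      by (rule normal_density_affine[OF PB_comp_distributed[OF bB]]) (use nz in auto)
    then show ?thesis by (simp add: X_def[abs_def])
  qed
  have ind0: "indep_vars (\<lambda>_. borel) (\<lambda>b f. (\<lambda>x. 0 + (w \<bullet> b) * x) (f b)) Basis"
    by (rule indep_vars_compose2[OF PB_indep]) auto
  have ind: "indep_vars (\<lambda>_. borel) X J"
    using indep_vars_subset[OF ind0 JB] by (simp add: X_def[abs_def])
  have s: "distributed PB lborel (\<lambda>f. \<Sum>b\<in>J. X b f) (normal_density (\<Sum>b\<in>J. 0) (sqrt (\<Sum>b\<in>J. (\<bar>w \<bullet> b\<bar>)\<^sup>2)))"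
    by (rule sum_indep_normal[OF Jfin Jne ind _ dX]) (auto simp: J_def)
  have "w \<bullet> w = (\<Sum>b\<in>Basis. (w \<bullet> b) * (w \<bullet> b))" by (rule euclidean_inner)
  also have "\<dots> = (\<Sum>b\<in>J. (w \<bullet> b) * (w \<bullet> b))"
    by (rule sum.mono_neutral_right) (auto simp: J_def)
  finally have "sqrt (\<Sum>b\<in>J. (\<bar>w \<bullet> b\<bar>)\<^sup>2) = norm w"
    by (simp add: norm_eq_sqrt_inner power2_eq_square)
  moreover have "(\<lambda>f. \<Sum>b\<in>J. X b f) = (\<lambda>f. TB f \<bullet> w)"
  proof
    fix f :: "'a \<Rightarrow> real"
    have "TB f \<bullet> w = (\<Sum>b\<in>Basis. (w \<bullet> b) * f b)"
      unfolding TB_def inner_sum_left inner_scaleR_left by (intro sum.cong refl) (simp add: inner_commute)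
    also have "\<dots> = (\<Sum>b\<in>J. (w \<bullet> b) * f b)"
      by (rule sum.mono_neutral_right) (auto simp: J_def)
    also have "\<dots> = (\<Sum>b\<in>J. X b f)" by (simp add: X_def)
    finally show "(\<Sum>b\<in>J. X b f) = TB f \<bullet> w" by simp
  qed
  ultimately have "distributed PB lborel (\<lambda>f. TB f \<bullet> w) (normal_density 0 (norm w))"
    using s by simp
  then show ?thesis
    using normal_standard_normal_convert[of "norm w" "\<lambda>f. TB f \<bullet> w" 0] w by simp
qed

lemma Gm_tail:
  fixes w :: "'a::euclidean_space" assumes w: "w \<noteq> 0"
  shows "emeasure (Gm :: 'a measure) {x. a < x \<bullet> w} = (\<integral>\<^sup>+y. ennreal (std_normal_density y) * indicator {a / norm w<..} y \<partial>lborel)"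
proof -
  have "emeasure (Gm :: 'a measure) {x. a < x \<bullet> w} = emeasure (PB :: ('a \<Rightarrow> real) measure) (TB -` {x. a < x \<bullet> w} \<inter> space PB)"
    unfolding Gm_distr by (rule emeasure_distr) (auto simp: PB_def)
  also have "TB -` {x. a < x \<bullet> w} \<inter> space PB = (\<lambda>f. (TB f \<bullet> w) / norm w) -` {a / norm w<..} \<inter> space (PB :: ('a \<Rightarrow> real) measure)"
    using w by (auto simp: divide_strict_right_mono divide_less_cancel)
  also have "emeasure PB \<dots> = (\<integral>\<^sup>+y. ennreal (std_normal_density y) * indicator {a / norm w<..} y \<partial>lborel)"
    by (rule distributed_emeasure[OF PB_inner_normal[OF w]]) simp
  finally show ?thesis .
qed


lemma gauss_tail_num:
  fixes e \<delta> c s :: real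
  assumes e: "0 < e" "e < 1" and d: "0 < \<delta>" "\<delta> < 1" and c: "c = sqrt (2 * ln (1.25 / \<delta>))"
    and s: "0 < s" "s \<le> e / c"
  shows "(\<integral>\<^sup>+y. ennreal (std_normal_density y) * indicator {(e - s\<^sup>2 / 2) / s<..} y \<partial>lborel) \<le> ennreal \<delta>"
proof -
  define t where "t = (e - s\<^sup>2 / 2) / s"
  define t0 where "t0 = c - e / (2 * c)"
  have lnpos: "0 < ln (1.25 / \<delta>)" using d by simp
  have c2: "c\<^sup>2 = 2 * ln (1.25 / \<delta>)" using c lnpos by simp
  have cpos: "0 < c" using c lnpos by simp
  have expc0: "exp (- c\<^sup>2 / 2) = \<delta> / 1.25"
    using c2 d by (simp add: exp_minus exp_ln)
  have expc: "exp (- c\<^sup>2 / 2) = 4/5 * \<delta>"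
    using expc0 by simp
  have ln125: "ln (1.25::real) \<ge> 1/5"
    using ln_le_minus_one[of "1/1.25::real"] by (simp add: ln_div)
  have "ln (1.25 / \<delta>) \<ge> ln 1.25" using d by (simp add: le_divide_eq)
  then have c2ge: "c\<^sup>2 \<ge> 2/5" using c2 ln125 by simp
  have "e / s \<ge> c" using s cpos e by (simp add: field_simps)
  moreover have "s / 2 \<le> e / (2 * c)" using s cpos by (simp add: field_simps)
  moreover have "t = e / s - s / 2" unfolding t_def using s by (simp add: field_simps power2_eq_square)
  ultimately have tt0: "t \<ge> t0" unfolding t0_def by simp
  have Q_eq: "(\<integral>\<^sup>+y. ennreal (std_normal_density y) * indicator {t<..} y \<partial>lborel) = (\<integral>\<^sup>+y. indicator {t<..} y * ennreal (std_normal_density y) \<partial>lborel)"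
    by (simp add: mult.commute)
  have big: "\<delta> \<ge> 15/16" if "t0 < 0"
  proof -
    have "c * c < e / 2" using that cpos unfolding t0_def by (simp add: field_simps)
    then have "c\<^sup>2 / 2 < 1/4" using e by (simp add: power2_eq_square)
    then have h1: "exp (- c\<^sup>2 / 2) \<ge> exp (- 1/4)" by (subst exp_le_cancel_iff) linarith
    have h2: "exp (- 1/4 :: real) \<ge> 3/4" using exp_ge_add_one_self[of "-1/4::real"] by simp
    from h1 h2 expc show ?thesis by linarith
  qed
  show ?thesis
  proof (cases "t \<ge> 0")
    case True
    have Q: "(\<integral>\<^sup>+y. ennreal (std_normal_density y) * indicator {t<..} y \<partial>lborel) \<le> ennreal (exp (- t\<^sup>2 / 2) / 2)"
      using std_normal_tail_pos[OF True] Q_eq by simp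
    have "exp (- t\<^sup>2 / 2) / 2 \<le> \<delta>"
    proof (cases "t0 \<ge> 0")
      case True
      have "t0\<^sup>2 \<le> t\<^sup>2" using tt0 True by (intro power_mono) auto
      moreover have "t0\<^sup>2 \<ge> c\<^sup>2 - 1"
      proof -
        have "t0\<^sup>2 = c\<^sup>2 - e + (e / (2 * c))\<^sup>2" unfolding t0_def using cpos
          by (simp add: power2_eq_square field_simps)
        moreover have "(e / (2 * c))\<^sup>2 \<ge> 0" by simp
        ultimately show ?thesis using e by linarith
      qed
      ultimately have "- t\<^sup>2 / 2 \<le> - c\<^sup>2 / 2 + 1/2" by simp
      then have "exp (- t\<^sup>2 / 2) \<le> exp (- c\<^sup>2 / 2 + 1/2)" by (subst exp_le_cancel_iff)
      also have "\<dots> = exp (- c\<^sup>2 / 2) * exp (1/2)" by (rule exp_add)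
      finally have "exp (- t\<^sup>2 / 2) \<le> exp (- c\<^sup>2 / 2) * exp (1/2)" .
      moreover have "exp (1/2::real) \<le> 2"
      proof -
        have "exp (1/2::real) * exp (1/2) = exp (1/2 + 1/2)" by (rule exp_add[symmetric])
        also have "\<dots> = exp 1" by simp
        also have "\<dots> \<le> 3" using exp_le by simp
        finally have "exp (1/2::real) * exp (1/2) \<le> 4" by simp
        then have "(exp (1/2::real))\<^sup>2 \<le> 2\<^sup>2" by (simp add: power2_eq_square)
        then show ?thesis by (rule power2_le_imp_le) simp
      qed
      moreover have "exp (- c\<^sup>2 / 2) * exp (1/2) \<le> exp (- c\<^sup>2 / 2) * 2"
        by (rule mult_left_mono) (fact, simp)
      ultimately have "exp (- t\<^sup>2 / 2) \<le> 4/5 * \<delta> * 2" using expc by linarith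
      then show ?thesis using d by simp
    next
      case False
      then have "\<delta> \<ge> 15/16" using big by simp
      moreover have "exp (- t\<^sup>2 / 2) \<le> 1" by simp
      ultimately show ?thesis by linarith
    qed
    then show ?thesis unfolding t_def[symmetric] by (rule order_trans[OF Q ennreal_leI])
  next
    case False
    then have Q: "(\<integral>\<^sup>+y. ennreal (std_normal_density y) * indicator {t<..} y \<partial>lborel) \<le> ennreal (1/2 - t / 2)"
      using std_normal_tail_neg[of t] Q_eq by simp
    have t0n: "t0 < 0" using False tt0 by simp
    have "e / (2 * c) \<le> 1 / (2 * c)" using cpos e by (intro divide_right_mono) auto
    then have "- t0 \<le> 1 / (2 * c)" unfolding t0_def using cpos by linarith
    also have "\<dots> \<le> 4/5"
    proof -
      have "(5/8)\<^sup>2 \<le> c\<^sup>2" using c2ge by (simp add: power2_eq_square)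
      then have "5/8 \<le> c" by (rule power2_le_imp_le) (use cpos in simp)
      then show ?thesis using cpos by (simp add: field_simps)
    qed
    finally have "1/2 - t/2 \<le> \<delta>" using big[OF t0n] tt0 by simp
    then show ?thesis unfolding t_def[symmetric] by (rule order_trans[OF Q ennreal_leI])
  qed
qed

lemma prob_Gm: "prob_space (Gm :: 'a::euclidean_space measure)"
  unfolding Gm_distr by (rule prob_space.prob_space_distr[OF prob_PB]) (simp add: PB_def)

lemma phi_shift: "std_normal_density (u + v) = std_normal_density u * exp (- (u * v) - v\<^sup>2 / 2)"
proof -
  have "exp (- (u + v)\<^sup>2 / 2) = exp (- u\<^sup>2 / 2) * exp (- (u * v) - v\<^sup>2 / 2)"
    unfolding mult_exp_exp by (rule arg_cong[where f=exp]) (simp add: power2_eq_square field_simps)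
  then show ?thesis unfolding std_normal_density_def by simp
qed

lemma gdens_shift:
  fixes w y :: "'a::euclidean_space"
  shows "gdens (w + y) = gdens y * exp (- (y \<bullet> w) - (norm w)\<^sup>2 / 2)"
proof -
  have "gdens (w + y) = (\<Prod>b\<in>Basis. std_normal_density (y \<bullet> b) * exp (- ((y \<bullet> b) * (w \<bullet> b)) - (w \<bullet> b)\<^sup>2 / 2))"
    unfolding gdens_def by (intro prod.cong refl) (simp add: inner_add_left phi_shift[symmetric] add.commute)
  also have "\<dots> = gdens y * exp (\<Sum>b\<in>Basis. - ((y \<bullet> b) * (w \<bullet> b)) - (w \<bullet> b)\<^sup>2 / 2)"
    unfolding gdens_def prod.distrib exp_sum[OF finite_Basis] by simp
  also have "(\<Sum>b\<in>Basis. - ((y \<bullet> b) * (w \<bullet> b)) - (w \<bullet> b)\<^sup>2 / 2) = - (y \<bullet> w) - (norm w)\<^sup>2 / 2"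
  proof -
    have "(\<Sum>b\<in>Basis. - ((y \<bullet> b) * (w \<bullet> b)) - (w \<bullet> b)\<^sup>2 / 2) = - (\<Sum>b\<in>Basis. (y \<bullet> b) * (w \<bullet> b)) - (\<Sum>b\<in>Basis. (w \<bullet> b) * (w \<bullet> b)) / 2"
      by (simp add: sum_subtractf sum_negf sum_divide_distrib power2_eq_square)
    then show ?thesis by (simp add: euclidean_inner[symmetric] power2_norm_eq_inner)
  qed
  finally show ?thesis .
qed

lemma ennreal_lin2: "0 \<le> a \<Longrightarrow> 0 \<le> b \<Longrightarrow> 0 \<le> c \<Longrightarrow> ennreal a * ennreal b + ennreal c = ennreal (a * b + c)"
  by (simp add: ennreal_mult)

lemma gauss_mech:
  fixes w :: "'a::euclidean_space" and S :: "'a set"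
  assumes S: "S \<in> sets borel"
    and e: "0 < e" "e < 1" and d: "0 < \<delta>" "\<delta> < 1" and c: "c = sqrt (2 * ln (1.25 / \<delta>))"
    and nw: "norm w \<le> e / c"
  shows "measure Gm S \<le> exp e * measure Gm {y. y - w \<in> S} + \<delta>"
proof -
  interpret G: prob_space "Gm :: 'a measure" by (rule prob_Gm)
  define Tl where "Tl = {y::'a. e - (norm w)\<^sup>2 / 2 < y \<bullet> w}"
  have S'm: "{y. y - w \<in> S} \<in> sets borel" using S by measurable
  have Tlm: "Tl \<in> sets borel" unfolding Tl_def by measurable
  have E1: "emeasure Gm S = (\<integral>\<^sup>+y. ennreal (gdens y) * indicator S y \<partial>lborel)"
    unfolding Gm_def using S by (simp add: emeasure_density)
  have E3: "emeasure Gm Tl = (\<integral>\<^sup>+y. ennreal (gdens y) * indicator Tl y \<partial>lborel)"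
    unfolding Gm_def using Tlm by (simp add: emeasure_density)
  have "emeasure Gm {y. y - w \<in> S} = (\<integral>\<^sup>+z. ennreal (gdens z) * indicator {y. y - w \<in> S} z \<partial>lborel)"
    unfolding Gm_def using S'm by (simp add: emeasure_density)
  also have "\<dots> = (\<integral>\<^sup>+z. ennreal (gdens z) * indicator {y. y - w \<in> S} z \<partial>distr lborel borel ((+) w))"
    by (simp add: lborel_distr_plus)
  also have "\<dots> = (\<integral>\<^sup>+y. ennreal (gdens (w + y)) * indicator S y \<partial>lborel)"
    using S by (subst nn_integral_distr) (auto simp: indicator_def)
  finally have E2: "emeasure Gm {y. y - w \<in> S} = (\<integral>\<^sup>+y. ennreal (gdens (w + y)) * indicator S y \<partial>lborel)" .
  have pw: "ennreal (gdens y) * indicator S y \<le> ennreal (exp e) * (ennreal (gdens (w + y)) * indicator S y) + ennreal (gdens y) * indicator Tl y" for y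
  proof (cases "y \<in> S")
    case False then show ?thesis by simp
  next
    case True
    show ?thesis
    proof (cases "y \<in> Tl")
      case True then show ?thesis using \<open>y \<in> S\<close> by (simp add: add_increasing)
    next
      case False
      then have le: "y \<bullet> w + (norm w)\<^sup>2 / 2 \<le> e" unfolding Tl_def by simp
      have gpos: "0 \<le> gdens y" unfolding gdens_def by (simp add: prod_nonneg)
      have "gdens y = gdens (w + y) * exp (y \<bullet> w + (norm w)\<^sup>2 / 2)"
        unfolding gdens_shift mult.assoc mult_exp_exp by simp
      also have "\<dots> \<le> gdens (w + y) * exp e"
        using le gpos by (intro mult_left_mono) (auto simp: gdens_def prod_nonneg)
      finally have "ennreal (gdens y) \<le> ennreal (exp e) * ennreal (gdens (w + y))"
        by (simp add: ennreal_mult'[symmetric] ennreal_leI mult.commute)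
      then show ?thesis using \<open>y \<in> S\<close> by (simp add: add_increasing2)
    qed
  qed
  have "emeasure Gm S \<le> (\<integral>\<^sup>+y. ennreal (exp e) * (ennreal (gdens (w + y)) * indicator S y) + ennreal (gdens y) * indicator Tl y \<partial>lborel)"
    unfolding E1 by (rule nn_integral_mono) (rule pw)
  also have "\<dots> = ennreal (exp e) * emeasure Gm {y. y - w \<in> S} + emeasure Gm Tl"
    unfolding E2 E3 using S Tlm by (subst nn_integral_add) (auto simp: nn_integral_cmult)
  finally have main: "emeasure Gm S \<le> ennreal (exp e) * emeasure Gm {y. y - w \<in> S} + emeasure Gm Tl" .
  have tail: "emeasure Gm Tl \<le> ennreal \<delta>"
  proof (cases "w = 0")
    case True
    then have "Tl = {}" unfolding Tl_def using e by auto
    then show ?thesis by simp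
  next
    case False
    have "emeasure Gm Tl = (\<integral>\<^sup>+y. ennreal (std_normal_density y) * indicator {(e - (norm w)\<^sup>2 / 2) / norm w<..} y \<partial>lborel)"
      unfolding Tl_def by (rule Gm_tail[OF False])
    also have "\<dots> \<le> ennreal \<delta>"
      by (rule gauss_tail_num[OF e d c]) (use False nw in auto)
    finally show ?thesis .
  qed
  have "ennreal (measure Gm S) \<le> ennreal (exp e) * ennreal (measure Gm {y. y - w \<in> S}) + ennreal \<delta>"
    using main tail by (simp add: G.emeasure_eq_measure) (meson add_left_mono order_trans)
  also have "\<dots> = ennreal (exp e * measure Gm {y. y - w \<in> S} + \<delta>)"
    using d by (intro ennreal_lin2) auto
  finally show ?thesis using d by (subst (asm) ennreal_le_iff) auto
qed


lemma Basis_vec_real: "(Basis :: (real^'q) set) = range (\<lambda>i. axis i 1)"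
  by (auto simp: Basis_vec_def)

lemma std_gauss_Gm: "(std_gauss :: (real^'q) measure) = Gm"
proof -
  have "(\<Prod>i\<in>UNIV. ennreal (std_normal_density (x $ i))) = ennreal (gdens x)" for x :: "real^'q"
  proof -
    have inj: "inj_on (\<lambda>i::'q. axis i (1::real)) UNIV" by (auto intro!: inj_onI simp: axis_eq_axis)
    have "gdens x = (\<Prod>i\<in>UNIV. std_normal_density (x \<bullet> axis i 1))"
      unfolding gdens_def Basis_vec_real prod.reindex[OF inj] by (simp add: o_def)
    also have "\<dots> = (\<Prod>i\<in>UNIV. std_normal_density (x $ i))" by (simp add: inner_axis)
    finally show ?thesis by (simp add: prod_ennreal)
  qed
  then show ?thesis unfolding std_gauss_def Gm_def by simp
qed

lemma ePTR_p_bounds: "0 \<le> ePTR_p e d g" "ePTR_p e d g \<le> 1"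
proof -
  have "0 < exp (e / 2 * (g - ePTR_M e d)) + 1" by (simp add: add_pos_pos)
  then show "0 \<le> ePTR_p e d g" "ePTR_p e d g \<le> 1" unfolding ePTR_p_def by (auto simp: divide_simps)
qed

lemma ennreal_lin3: "0 \<le> a \<Longrightarrow> 0 \<le> b \<Longrightarrow> 0 \<le> c \<Longrightarrow> 0 \<le> d \<Longrightarrow> ennreal a * ennreal b + ennreal c * ennreal d = ennreal (a * b + c * d)"
  by (simp add: ennreal_mult)

lemma ePTR_measure:
  fixes \<theta> :: "'z list \<Rightarrow> real ^ 'q" and \<pi> :: "(real ^ 'q) measure"
    and \<gamma> :: "'z list \<Rightarrow> real" and X :: "'z list" and \<epsilon> \<delta> \<alpha> :: real
  assumes pi: "prob_space \<pi>" "sets \<pi> = sets borel" and B: "B \<in> sets borel"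
  defines "p \<equiv> ePTR_p \<epsilon> \<delta> (\<gamma> X)"
  defines "\<sigma> \<equiv> 2 * \<alpha> / \<epsilon> * sqrt (2 * ln (1.25 / \<delta>))"
  shows "measure (ePTR \<theta> \<alpha> \<gamma> \<epsilon> \<delta> \<pi> X) B
     = p * measure (Gm :: (real^'q) measure) {\<zeta>. \<theta> X + \<sigma> *\<^sub>R \<zeta> \<in> B} + (1 - p) * measure \<pi> B"
proof -
  interpret G: prob_space "Gm :: (real^'q) measure" by (rule prob_Gm)
  interpret P: prob_space \<pi> by (rule pi)
  interpret GP: pair_prob_space "Gm :: (real^'q) measure" \<pi> ..
  have sfGP: "sigma_finite_measure ((Gm :: (real^'q) measure) \<Otimes>\<^sub>M \<pi>)"
    by (rule prob_space_imp_sigma_finite) (rule GP.P.prob_space_axioms)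
  have sp: "space \<pi> = UNIV" using sets_eq_imp_space_eq[OF pi(2)] by simp
  have spG: "space (Gm :: (real^'q) measure) = UNIV" by (simp add: Gm_def)
  have p01: "0 \<le> p" "p \<le> 1" unfolding p_def by (rule ePTR_p_bounds)+
  define K where "K = measure_pmf (bernoulli_pmf p) \<Otimes>\<^sub>M ((Gm :: (real^'q) measure) \<Otimes>\<^sub>M \<pi>)"
  define f where "f = (\<lambda>(I::bool, \<zeta>::real^'q, W::real^'q). if I then \<theta> X + \<sigma> *\<^sub>R \<zeta> else W)"
  have e: "ePTR \<theta> \<alpha> \<gamma> \<epsilon> \<delta> \<pi> X = distr K borel f"
    unfolding ePTR_def K_def f_def p_def \<sigma>_def std_gauss_Gm ..
  define S where "S = {\<zeta>::real^'q. \<theta> X + \<sigma> *\<^sub>R \<zeta> \<in> B}"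
  have Sm: "S \<in> sets borel" unfolding S_def using B by measurable
  have fm: "f \<in> measurable K borel"
  proof -
    have sG: "sets (Gm :: (real^'q) measure) = sets borel" by (simp add: Gm_def)
    have f_eq: "f = (\<lambda>x. if fst x then \<theta> X + \<sigma> *\<^sub>R fst (snd x) else snd (snd x))"
      unfolding f_def by (auto simp: fun_eq_iff split: prod.splits)
    have m1: "(\<lambda>x. \<theta> X + \<sigma> *\<^sub>R fst (snd x)) \<in> measurable K borel"
      unfolding K_def by (auto intro!: borel_measurable_add borel_measurable_scaleR measurable_fst'' measurable_snd''
          measurable_ident_sets[OF sG] simp: measurable_cong_sets[OF sG refl, symmetric])
    have m2: "(\<lambda>x. snd (snd x)) \<in> measurable K borel"
      unfolding K_def by (auto intro!: measurable_snd'' measurable_ident_sets[OF pi(2)])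
    have m3: "{x \<in> space K. fst x} \<in> sets K"
    proof -
      have "{x \<in> space K. fst x} = {True} \<times> space (Gm \<Otimes>\<^sub>M \<pi>)"
        by (auto simp: K_def space_pair_measure)
      then show ?thesis unfolding K_def by simp
    qed
    show ?thesis unfolding f_eq by (rule measurable_If[OF m1 m2 m3])
  qed
  have A: "f -` B \<inter> space K \<in> sets K" using fm B by measurable
  have "emeasure (distr K borel f) B = emeasure K (f -` B \<inter> space K)"
    by (rule emeasure_distr[OF fm B])
  also have "\<dots> = (\<integral>\<^sup>+I. emeasure ((Gm :: (real^'q) measure) \<Otimes>\<^sub>M \<pi>) (Pair I -` (f -` B \<inter> space K)) \<partial>measure_pmf (bernoulli_pmf p))"
    unfolding K_def by (rule sigma_finite_measure.emeasure_pair_measure_alt[OF sfGP]) (use A in \<open>simp add: K_def\<close>)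
  also have "\<dots> = emeasure ((Gm :: (real^'q) measure) \<Otimes>\<^sub>M \<pi>) (Pair True -` (f -` B \<inter> space K)) * p
      + emeasure ((Gm :: (real^'q) measure) \<Otimes>\<^sub>M \<pi>) (Pair False -` (f -` B \<inter> space K)) * (1 - p)"
    using p01 by (subst nn_integral_bernoulli_pmf) auto
  also have "Pair True -` (f -` B \<inter> space K) = S \<times> UNIV"
    by (auto simp: K_def f_def S_def space_pair_measure sp spG)
  also have "Pair False -` (f -` B \<inter> space K) = UNIV \<times> B"
    by (auto simp: K_def f_def space_pair_measure sp spG)
  also have "emeasure ((Gm :: (real^'q) measure) \<Otimes>\<^sub>M \<pi>) (S \<times> UNIV) = emeasure (Gm :: (real^'q) measure) S"
    using P.emeasure_pair_measure_Times[where N=Gm and A=S and B=UNIV] Sm sp pi(2) P.emeasure_space_1 by (simp add: Gm_def)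
  also have "emeasure ((Gm :: (real^'q) measure) \<Otimes>\<^sub>M \<pi>) (UNIV \<times> B) = emeasure \<pi> B"
  proof -
    have "emeasure ((Gm :: (real^'q) measure) \<Otimes>\<^sub>M \<pi>) (UNIV \<times> B) = emeasure (Gm :: (real^'q) measure) UNIV * emeasure \<pi> B"
      by (rule P.emeasure_pair_measure_Times) (use B pi(2) in \<open>auto simp: Gm_def\<close>)
    then show ?thesis using G.emeasure_space_1 spG by simp
  qed
  finally have "emeasure (distr K borel f) B = ennreal (measure (Gm :: (real^'q) measure) S * p + measure \<pi> B * (1 - p))"
    using p01 by (simp add: G.emeasure_eq_measure P.emeasure_eq_measure ennreal_lin3)
  then have "measure (distr K borel f) B = measure (Gm :: (real^'q) measure) S * p + measure \<pi> B * (1 - p)"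
    unfolding measure_def[of "distr K borel f"] using p01 by (simp del: ennreal_plus)
  then show ?thesis unfolding e S_def by (simp add: mult.commute)
qed


lemma arith_final:
  fixes a a' g g' b k \<delta> :: real
  assumes a: "0 \<le> a" "a \<le> 1" and a': "0 \<le> a'" "a' \<le> 1" and g: "0 \<le> g" "g \<le> 1" and g': "0 \<le> g'"
    and b: "0 \<le> b" and aa: "a \<le> k * a'" and aa1: "1 - a \<le> k * (1 - a')" and k: "1 \<le> k"
    and d: "0 \<le> \<delta>" and h: "g \<le> k * g' + \<delta> \<or> a \<le> \<delta>"
  shows "a * g + (1 - a) * b \<le> k * k * (a' * g' + (1 - a') * b) + \<delta>"
proof -
  have "(1 - a) * b \<le> (k * (1 - a')) * b" using aa1 b by (rule mult_right_mono)
  also have "\<dots> \<le> k * (k * ((1 - a') * b))"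
  proof -
    have "0 \<le> (1 - a') * b" using a' b by simp
    then have "(1 - a') * b \<le> k * ((1 - a') * b)" using k by (simp add: mult_le_cancel_right1)
    then show ?thesis using k by (simp add: mult.assoc mult_left_mono)
  qed
  finally have B: "(1 - a) * b \<le> k * k * ((1 - a') * b)" by (simp add: mult.assoc)
  have A: "a * g \<le> k * k * (a' * g') + \<delta>"
    using h
  proof
    assume hg: "g \<le> k * g' + \<delta>"
    have "a * g \<le> a * (k * g' + \<delta>)" using hg a by (intro mult_left_mono) auto
    also have "\<dots> = a * (k * g') + a * \<delta>" by (simp add: algebra_simps)
    also have "a * (k * g') \<le> (k * a') * (k * g')" using aa g' k by (intro mult_right_mono) auto
    also have "a * \<delta> \<le> 1 * \<delta>" using a d by (intro mult_right_mono) auto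
    finally show ?thesis by (simp add: algebra_simps)
  next
    assume ha: "a \<le> \<delta>"
    have "a * g \<le> a * 1" using a g by (intro mult_left_mono) auto
    moreover have "0 \<le> k * k * (a' * g')" using k a' g' by simp
    ultimately show ?thesis using ha by simp
  qed
  from A B show ?thesis by (simp add: algebra_simps)
qed

lemma logistic_ratio:
  fixes e d g g' :: real
  assumes e: "0 < e" and gg: "\<bar>g - g'\<bar> \<le> 1"
  shows "ePTR_p e d g \<le> exp (e/2) * ePTR_p e d g'"
    and "1 - ePTR_p e d g \<le> exp (e/2) * (1 - ePTR_p e d g')"
proof -
  define u where "u = e / 2 * (g - ePTR_M e d)"
  define u' where "u' = e / 2 * (g' - ePTR_M e d)"
  define k where "k = exp (e/2)"
  have d1: "u - u' = e/2 * (g - g')" "u' - u = e/2 * (g' - g)" unfolding u_def u'_def by (simp_all add: field_simps)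
  have "e/2 * (g - g') \<le> e/2 * 1" "e/2 * (g' - g) \<le> e/2 * 1" using gg e by (intro mult_left_mono; auto simp: abs_le_iff)+
  then have uu: "u \<le> u' + e/2" "u' \<le> u + e/2" using d1 by linarith+
  have E: "exp u \<le> k * exp u'" "exp u' \<le> k * exp u"
    using uu unfolding k_def by (simp_all add: mult_exp_exp add.commute)
  have k1: "1 \<le> k" unfolding k_def using e by simp
  have pos: "0 < exp u" "0 < exp u'" "0 < 1 + exp u" "0 < 1 + exp u'" "0 < exp u + 1" "0 < exp u' + 1"
    by (simp_all add: add_pos_pos)
  have p: "ePTR_p e d g = exp u / (exp u + 1)" "ePTR_p e d g' = exp u' / (exp u' + 1)"
    unfolding ePTR_p_def u_def u'_def by simp_all
  have q: "1 - ePTR_p e d g = 1 / (exp u + 1)" "1 - ePTR_p e d g' = 1 / (exp u' + 1)"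
  proof -
    have nz: "exp u + 1 \<noteq> 0" "exp u' + 1 \<noteq> 0" "1 + exp u \<noteq> 0" "1 + exp u' \<noteq> 0" using pos by linarith+
    show "1 - ePTR_p e d g = 1 / (exp u + 1)" "1 - ePTR_p e d g' = 1 / (exp u' + 1)"
      unfolding p using nz by (simp_all add: divide_simps)
  qed
  have "exp u * (exp u' + 1) \<le> k * exp u' * (exp u + 1)"
  proof -
    have "1 * (exp u * exp u') \<le> k * (exp u * exp u')" using k1 pos
      by (intro mult_right_mono) auto
    then have "exp u * exp u' \<le> k * exp u' * exp u" by (simp add: algebra_simps)
    moreover have "exp u \<le> k * exp u'" by (rule E(1))
    moreover have "exp u * (exp u' + 1) = exp u * exp u' + exp u" "k * exp u' * (exp u + 1) = k * exp u' * exp u + k * exp u'"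
      by (simp_all add: algebra_simps)
    ultimately show ?thesis by linarith
  qed
  then show "ePTR_p e d g \<le> exp (e/2) * ePTR_p e d g'"
    unfolding p k_def[symmetric] using pos by (simp add: field_simps)
  have "exp u' + 1 \<le> k * (exp u + 1)" using E(2) k1 by (simp add: algebra_simps)
  then show "1 - ePTR_p e d g \<le> exp (e/2) * (1 - ePTR_p e d g')"
    unfolding q k_def[symmetric] using pos by (simp add: field_simps)
qed

lemma p_zero:
  fixes e d :: real assumes e: "0 < e" and d: "0 < d" "d < 1"
  shows "ePTR_p e d 0 \<le> d"
proof -
  define u where "u = e / 2 * (0 - ePTR_M e d)"
  have "u = - e/2 - ln (max (1/d) (1/e))" unfolding u_def ePTR_M_def using e by (simp add: field_simps)
  moreover have "ln (1/d) \<le> ln (max (1/d) (1/e))" using d e by (subst ln_le_cancel_iff) (auto simp: less_max_iff_disj)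
  ultimately have "u \<le> - ln (1/d)" using e by simp
  then have "exp u \<le> exp (- ln (1/d))" by simp
  also have "\<dots> = d" using d by (simp add: ln_div exp_minus)
  finally have "exp u \<le> d" .
  moreover have "exp u / (exp u + 1) \<le> exp u" by (simp add: divide_le_eq add_pos_pos)
  ultimately show ?thesis unfolding ePTR_p_def u_def[symmetric] by simp
qed


theorem theorem1:
  fixes n :: nat
    and \<theta> :: "'z list \<Rightarrow> real ^ 'q"
    and \<alpha> \<epsilon> \<delta> :: real
    and G :: "'z list set"
    and \<gamma> :: "'z list \<Rightarrow> real"
    and \<pi> :: "(real ^ 'q) measure"
  assumes "n \<ge> 1"
    and "\<alpha> > 0" and "0 < \<epsilon>" and "\<epsilon> < 2" and "0 < \<delta>" and "\<delta> < 1"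
    and "G \<subseteq> sub_sens n \<alpha> \<theta>"
    and "sub_distance n G \<gamma>"
    and "prob_space \<pi>" and "sets \<pi> = sets borel"
  shows "DP n \<epsilon> \<delta> (ePTR \<theta> \<alpha> \<gamma> \<epsilon> \<delta> \<pi>)"
proof -
  note A = assms
  interpret P: prob_space \<pi> by (rule A(9))
  interpret Gq: prob_space "Gm :: (real^'q) measure" by (rule prob_Gm)
  define c where "c = sqrt (2 * ln (1.25 / \<delta>))"
  define \<sigma> where "\<sigma> = 2 * \<alpha> / \<epsilon> * sqrt (2 * ln (1.25 / \<delta>))"
  have cpos: "0 < c" unfolding c_def using A(5,6) by simp
  have \<sigma>c: "\<sigma> = 2 * \<alpha> / \<epsilon> * c" unfolding \<sigma>_def c_def ..
  have \<sigma>pos: "0 < \<sigma>" unfolding \<sigma>c using cpos A(2,3) by simp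
  have sd: "\<forall>X\<in>datasets n. \<gamma> X \<ge> 0" "\<forall>X\<in>datasets n. \<forall>X'\<in>datasets n. \<bar>\<gamma> X - \<gamma> X'\<bar> \<le> real (hamming X X')"
    "{X \<in> datasets n. \<gamma> X > 0} \<subseteq> G"
    using A(8) unfolding sub_distance_def by blast+
  show ?thesis unfolding DP_def
  proof (intro allI impI)
    fix X X' :: "'z list" and B :: "(real^'q) set"
    assume nb: "neighbors n X X'" and Bs: "B \<in> sets (ePTR \<theta> \<alpha> \<gamma> \<epsilon> \<delta> \<pi> X)"
    have B: "B \<in> sets borel" using Bs by (simp add: ePTR_def)
    have XD: "X \<in> datasets n" "X' \<in> datasets n" "hamming X X' = 1" using nb unfolding neighbors_def by auto
    define a where "a = ePTR_p \<epsilon> \<delta> (\<gamma> X)"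
    define a' where "a' = ePTR_p \<epsilon> \<delta> (\<gamma> X')"
    define S where "S = {\<zeta>::real^'q. \<theta> X + \<sigma> *\<^sub>R \<zeta> \<in> B}"
    define S' where "S' = {\<zeta>::real^'q. \<theta> X' + \<sigma> *\<^sub>R \<zeta> \<in> B}"
    define gX where "gX = measure (Gm :: (real^'q) measure) S"
    define gX' where "gX' = measure (Gm :: (real^'q) measure) S'"
    define b where "b = measure \<pi> B"
    have mX: "measure (ePTR \<theta> \<alpha> \<gamma> \<epsilon> \<delta> \<pi> X) B = a * gX + (1 - a) * b"
      unfolding a_def gX_def b_def S_def \<sigma>_def by (rule ePTR_measure[OF A(9,10) B])
    have mX': "measure (ePTR \<theta> \<alpha> \<gamma> \<epsilon> \<delta> \<pi> X') B = a' * gX' + (1 - a') * b"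
      unfolding a'_def gX'_def b_def S'_def \<sigma>_def by (rule ePTR_measure[OF A(9,10) B])
    have gg: "\<bar>\<gamma> X - \<gamma> X'\<bar> \<le> 1" using sd(2) XD by force
    have la: "a \<le> exp (\<epsilon>/2) * a'" "1 - a \<le> exp (\<epsilon>/2) * (1 - a')"
      unfolding a_def a'_def using logistic_ratio[OF A(3) gg] by auto
    have key: "gX \<le> exp (\<epsilon>/2) * gX' + \<delta> \<or> a \<le> \<delta>"
    proof (cases "\<gamma> X > 0")
      case True
      then have "X \<in> G" using sd(3) XD by blast
      then have "X \<in> sub_sens n \<alpha> \<theta>" using A(7) by blast
      then have ls: "local_sens n \<theta> X \<le> ereal \<alpha>" unfolding sub_sens_def by simp
      have "ereal (norm (\<theta> X - \<theta> X')) \<le> local_sens n \<theta> X"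
        unfolding local_sens_def by (rule SUP_upper) (use nb in simp)
      then have "ereal (norm (\<theta> X - \<theta> X')) \<le> ereal \<alpha>" using ls by (rule order_trans)
      then have nd: "norm (\<theta> X - \<theta> X') \<le> \<alpha>" by simp
      define w where "w = (1 / \<sigma>) *\<^sub>R (\<theta> X - \<theta> X')"
      have "norm w = norm (\<theta> X - \<theta> X') / \<sigma>" unfolding w_def using \<sigma>pos by simp
      also have "\<dots> \<le> \<alpha> / \<sigma>" using nd \<sigma>pos by (simp add: divide_right_mono)
      also have "\<dots> = (\<epsilon> / 2) / c" unfolding \<sigma>c using A(2,3) cpos by (simp add: field_simps)
      finally have nw: "norm w \<le> (\<epsilon> / 2) / c" .
      have Sm: "S \<in> sets borel" unfolding S_def using B by measurable
      have "gX \<le> exp (\<epsilon>/2) * measure (Gm :: (real^'q) measure) {y. y - w \<in> S} + \<delta>"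
        unfolding gX_def by (rule gauss_mech[OF Sm _ _ A(5,6) c_def nw]) (use A(3,4) in auto)
      also have "{y. y - w \<in> S} = S'"
      proof -
        have "\<theta> X + \<sigma> *\<^sub>R (y - w) = \<theta> X' + \<sigma> *\<^sub>R y" for y
          unfolding w_def using \<sigma>pos by (simp add: scaleR_diff_right algebra_simps)
        then show ?thesis unfolding S_def S'_def by auto
      qed
      finally show ?thesis unfolding gX'_def by simp
    next
      case False
      then have "\<gamma> X = 0" using sd(1) XD by force
      then have "a \<le> \<delta>" unfolding a_def using p_zero[OF A(3) A(5,6)] by simp
      then show ?thesis by simp
    qed
    have "a * gX + (1 - a) * b \<le> exp (\<epsilon>/2) * exp (\<epsilon>/2) * (a' * gX' + (1 - a') * b) + \<delta>"
      by (rule arith_final[OF _ _ _ _ _ _ _ _ la _ _ key]) (use A(3,5) in \<open>auto simp: a_def a'_def ePTR_p_bounds gX_def gX'_def b_def\<close>)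
    also have "exp (\<epsilon>/2) * exp (\<epsilon>/2) = exp \<epsilon>" by (simp add: mult_exp_exp)
    finally show "measure (ePTR \<theta> \<alpha> \<gamma> \<epsilon> \<delta> \<pi> X) B \<le> exp \<epsilon> * measure (ePTR \<theta> \<alpha> \<gamma> \<epsilon> \<delta> \<pi> X') B + \<delta>"
      unfolding mX mX' .
  qed
qed

end
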